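(* Let $P$ be a finite graded poset of rank $n$ with $\hat0$ and $\hat1$ admitting an $S_n$ EL-labeling, and let $\chi_P$ be the character of the representation of $\mathcal{H}_n(0)$ on $\mathbb{C}\mathcal{M}(P)$ in which $T_i$ acts as $-U_i$. Then $\omega F_P(x)=\mathrm{ch}(\chi_P)$.
   Context: $P$ finite graded of rank $n$ with $\hat0,\hat1$; $\mathcal{M}(P)$ its maximal chains; $\mathrm{rk}$ its rank function, $\mathrm{rk}(x,y)=\mathrm{rk}(y)-\mathrm{rk}(x)$. An $S_n$ EL-labeling is an edge-labeling $\lambda$ of the covering pairs of $P$ such that every interval $[s,t]$ has exactly one maximal chain with weakly increasing labels (bottom to top), whose label sequence is lexicographically smallest among maximal chains of $[s,t]$, and such that the labels $\omega_{\mathfrak m}=(\lambda(x_0,x_1),\dots,\lambda(x_{n-1},x_n))$ along every maximal chain $\mathfrak m:\hat0=x_0<\cdots<x_n=\hat1$ form a permutation of $[n]$. For $i\in[n-1]$, $U_i(\mathfrak m)$ is the unique maximal chain agreeing with $\mathfrak m$ except possibly at rank $i$ and whose label permutation has no descent at $i$; these satisfy the defining relations of $\mathcal{H}_n(0)$ with $T_i=-U_i$ (where $\mathcal{H}_n(0)$ is generated by $T_1,\dots,T_{n-1}$ with $T_i^2=-T_i$, $T_iT_j=T_jT_i$ for $|i-j|\ge2$, $T_iT_{i+1}T_i=T_{i+1}T_iT_{i+1}$). Ehrenborg's flag quasisymmetric function is $F_P(x)=\sum x_1^{\mathrm{rk}(t_0,t_1)}x_2^{\mathrm{rk}(t_1,t_2)}\cdots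 x_k^{\mathrm{rk}(t_{k-1},t_k)}$, summed over all multichains $\hat0=t_0\le t_1\le\cdots\le t_{k-1}<t_k=\hat1$ (all $k\ge1$). For $S\subseteq[n-1]$, Gessel's fundamental quasisymmetric function is $L_{S,n}(x)=\sum x_{i_1}\cdots x_{i_n}$ over $1\le i_1\le\cdots\le i_n$ with $i_j<i_{j+1}$ whenever $j\in S$. The involution $\omega$ on quasisymmetric functions of degree $n$ is the linear map with $\omega(L_{S,n})=L_{[n-1]\setminus S,n}$. For $S\subseteq[n-1]$, $\chi_S$ is the character of the one-dimensional representation of $\mathcal{H}_n(0)$ with $T_i\mapsto -1$ if $i\in S$ and $T_i\mapsto 0$ otherwise; the characteristic is the linear map with $\mathrm{ch}(\chi_S)=L_{S,n}$, extended linearly to characters written as combinations $\sum_S c_S\chi_S$. *)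

theory Defs
  imports "HOL-Library.Multiset"
begin

definition covers :: "'a set \<Rightarrow> ('a \<Rightarrow> 'a \<Rightarrow> bool) \<Rightarrow> 'a \<Rightarrow> 'a \<Rightarrow> bool" where
  "covers P le x y \<longleftrightarrow> x \<in> P \<and> y \<in> P \<and> le x y \<and> x \<noteq> y \<and>
     \<not> (\<exists>z\<in>P. le x z \<and> le z y \<and> z \<noteq> x \<and> z \<noteq> y)"

definition bounded_graded_poset ::
  "'a set \<Rightarrow> ('a \<Rightarrow> 'a \<Rightarrow> bool) \<Rightarrow> ('a \<Rightarrow> nat) \<Rightarrow> 'a \<Rightarrow> 'a \<Rightarrow> nat \<Rightarrow> bool" where
  "bounded_graded_poset P le rk zero one n \<longleftrightarrow>
     finite P \<and>
     (\<forall>x\<in>P. le x x) \<and>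
     (\<forall>x\<in>P. \<forall>y\<in>P. le x y \<and> le y x \<longrightarrow> x = y) \<and>
     (\<forall>x\<in>P. \<forall>y\<in>P. \<forall>z\<in>P. le x y \<and> le y z \<longrightarrow> le x z) \<and>
     zero \<in> P \<and> one \<in> P \<and> (\<forall>x\<in>P. le zero x \<and> le x one) \<and>
     rk zero = 0 \<and> rk one = n \<and>
     (\<forall>x y. covers P le x y \<longrightarrow> rk y = rk x + 1)"

definition max_chains :: "'a set \<Rightarrow> ('a \<Rightarrow> 'a \<Rightarrow> bool) \<Rightarrow> 'a \<Rightarrow> 'a \<Rightarrow> 'a list set" where
  "max_chains P le s t = {c. c \<noteq> [] \<and> hd c = s \<and> last c = t \<and> set c \<subseteq> P \<and>
      (\<forall>j. Suc j < length c \<longrightarrow> covers P le (c ! j) (c ! Suc j))}"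

definition labels :: "('a \<Rightarrow> 'a \<Rightarrow> nat) \<Rightarrow> 'a list \<Rightarrow> nat list" where
  "labels lab c = map (\<lambda>j. lab (c ! j) (c ! Suc j)) [0..<length c - 1]"

definition Sn_EL_labeling ::
  "'a set \<Rightarrow> ('a \<Rightarrow> 'a \<Rightarrow> bool) \<Rightarrow> 'a \<Rightarrow> 'a \<Rightarrow> nat \<Rightarrow> ('a \<Rightarrow> 'a \<Rightarrow> nat) \<Rightarrow> bool" where
  "Sn_EL_labeling P le zero one n lab \<longleftrightarrow>
     (\<forall>s\<in>P. \<forall>t\<in>P. le s t \<longrightarrow>
        (\<exists>!c. c \<in> max_chains P le s t \<and> sorted (labels lab c)) \<and>
        (\<forall>c\<in>max_chains P le s t. sorted (labels lab c) \<longrightarrow>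
           (\<forall>c'\<in>max_chains P le s t. lexordp_eq (labels lab c) (labels lab c')))) \<and>
     (\<forall>m\<in>max_chains P le zero one. mset (labels lab m) = mset [1..<n+1])"

text \<open>U_i on maximal chains (ranks 0..n are list positions 0..n).\<close>
definition Uop :: "'a set \<Rightarrow> ('a \<Rightarrow> 'a \<Rightarrow> bool) \<Rightarrow> 'a \<Rightarrow> 'a \<Rightarrow> ('a \<Rightarrow> 'a \<Rightarrow> nat)
    \<Rightarrow> nat \<Rightarrow> 'a list \<Rightarrow> 'a list" where
  "Uop P le zero one lab i m = (THE m'. m' \<in> max_chains P le zero one \<and>
      length m' = length m \<and> (\<forall>j. j \<noteq> i \<longrightarrow> m' ! j = m ! j) \<and>
      lab (m' ! (i - 1)) (m' ! i) < lab (m' ! i) (m' ! Suc i))"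

text \<open>The character chi_P of the representation of H_n(0) on C M(P), with T_i acting
  as -U_i, evaluated on the word T_{w1} T_{w2} ... T_{wk} (a list of generator indices):
  the trace of the operator (-1)^k U_{w1} o ... o U_{wk}.\<close>
definition chiP :: "'a set \<Rightarrow> ('a \<Rightarrow> 'a \<Rightarrow> bool) \<Rightarrow> 'a \<Rightarrow> 'a \<Rightarrow> ('a \<Rightarrow> 'a \<Rightarrow> nat)
    \<Rightarrow> nat list \<Rightarrow> int" where
  "chiP P le zero one lab w = (-1) ^ length w *
     (\<Sum>m\<in>max_chains P le zero one.
        (if foldr (Uop P le zero one lab) w m = m then 1 else 0))"

definition chiS :: "nat set \<Rightarrow> nat list \<Rightarrow> int" where
  "chiS S w = (\<Prod>i\<leftarrow>w. if i \<in> S then -1 else 0)"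

text \<open>A formal power series in x_1, x_2, ... is represented by its coefficient function on
  exponent vectors alpha :: nat => nat; alpha v is the exponent of the variable x_{v+1}.\<close>

definition fundL :: "nat set \<Rightarrow> nat \<Rightarrow> (nat \<Rightarrow> nat) \<Rightarrow> int" where
  "fundL S n \<alpha> = int (card {i :: nat list. length i = n \<and> sorted i \<and>
      (\<forall>j\<in>S. i ! (j - 1) < i ! j) \<and> (\<forall>v. count (mset i) v = \<alpha> v)})"

text \<open>Ehrenborg's flag quasisymmetric function: the term of the multichain
  t_0 <= ... <= t_{k-1} < t_k is the monomial with exponent rk(t_v,t_{v+1}) at x_{v+1}.\<close>
definition flagF :: "'a set \<Rightarrow> ('a \<Rightarrow> 'a \<Rightarrow> bool) \<Rightarrow> ('a \<Rightarrow> nat) \<Rightarrow> 'a \<Rightarrow> 'a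
    \<Rightarrow> (nat \<Rightarrow> nat) \<Rightarrow> int" where
  "flagF P le rk zero one \<alpha> = int (card {t. \<exists>k\<ge>1. length t = Suc k \<and> set t \<subseteq> P \<and>
      t ! 0 = zero \<and> t ! k = one \<and>
      (\<forall>j<k. le (t ! j) (t ! Suc j)) \<and> t ! (k - 1) \<noteq> one \<and>
      (\<forall>v<k. \<alpha> v = rk (t ! Suc v) - rk (t ! v)) \<and> (\<forall>v\<ge>k. \<alpha> v = 0)})"

text \<open>Expansion coefficients in the fundamental basis (unique when they exist).\<close>
definition qsym_coeffs :: "nat \<Rightarrow> ((nat \<Rightarrow> nat) \<Rightarrow> int) \<Rightarrow> nat set \<Rightarrow> int" where
  "qsym_coeffs n f = (THE d. (\<forall>S. S \<notin> Pow {1..<n} \<longrightarrow> d S = 0) \<and>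
      f = (\<lambda>\<alpha>. \<Sum>S\<in>Pow {1..<n}. d S * fundL S n \<alpha>))"

definition omegaQ :: "nat \<Rightarrow> ((nat \<Rightarrow> nat) \<Rightarrow> int) \<Rightarrow> (nat \<Rightarrow> nat) \<Rightarrow> int" where
  "omegaQ n f = (\<lambda>\<alpha>. \<Sum>S\<in>Pow {1..<n}. qsym_coeffs n f S * fundL ({1..<n} - S) n \<alpha>)"

definition char_coeffs :: "nat \<Rightarrow> (nat list \<Rightarrow> int) \<Rightarrow> nat set \<Rightarrow> int" where
  "char_coeffs n \<chi> = (THE d. (\<forall>S. S \<notin> Pow {1..<n} \<longrightarrow> d S = 0) \<and>
      (\<forall>w. set w \<subseteq> {1..<n} \<longrightarrow> \<chi> w = (\<Sum>S\<in>Pow {1..<n}. d S * chiS S w)))"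

definition chQ :: "nat \<Rightarrow> (nat list \<Rightarrow> int) \<Rightarrow> (nat \<Rightarrow> nat) \<Rightarrow> int" where
  "chQ n \<chi> = (\<lambda>\<alpha>. \<Sum>S\<in>Pow {1..<n}. char_coeffs n \<chi> S * fundL S n \<alpha>)"

end

theory Submission imports Defs begin


lemma sum_group_card:
  fixes g :: "'b \<Rightarrow> 'c::comm_ring_1"
  assumes "finite A" "finite B" "f ` A \<subseteq> B"
  shows "(\<Sum>x\<in>A. g (f x)) = (\<Sum>y\<in>B. of_nat (card {x\<in>A. f x = y}) * g y)"
proof -
  have "(\<Sum>x\<in>A. g (f x)) = (\<Sum>y\<in>B. \<Sum>x\<in>{x. x \<in> A \<and> f x = y}. g (f x))"
    using sum.group[OF assms, of "\<lambda>x. g (f x)"] by simp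
  also have "\<dots> = (\<Sum>y\<in>B. of_nat (card {x\<in>A. f x = y}) * g y)"
    by (rule sum.cong) auto
  finally show ?thesis .
qed


lemma chiS_eval: "chiS S w = (if set w \<subseteq> S then (-1) ^ length w else 0)"
  unfolding chiS_def by (induction w) auto

lemma indep_super:
  fixes d :: "nat set \<Rightarrow> int"
  assumes U: "finite U" and H: "\<And>A. A \<subseteq> U \<Longrightarrow> (\<Sum>S\<in>{S. S \<subseteq> U \<and> A \<subseteq> S}. d S) = 0"
  shows "A \<subseteq> U \<Longrightarrow> d A = 0"
proof (induction "card (U - A)" arbitrary: A rule: less_induct)
  case (less A)
  have fin: "finite {S. S \<subseteq> U \<and> A \<subseteq> S}" using U by simp
  have A_in: "A \<in> {S. S \<subseteq> U \<and> A \<subseteq> S}" using less.prems by simp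
  have z: "d S = 0" if "S \<in> {S. S \<subseteq> U \<and> A \<subseteq> S} - {A}" for S
  proof -
    have "S \<subseteq> U" "A \<subset> S" using that by auto
    then have "U - S \<subset> U - A" using less.prems by blast
    then have "card (U - S) < card (U - A)" using U by (simp add: psubset_card_mono)
    then show ?thesis using less.hyps \<open>S \<subseteq> U\<close> by blast
  qed
  have "0 = (\<Sum>S\<in>{S. S \<subseteq> U \<and> A \<subseteq> S}. d S)" using H less.prems by simp
  also have "\<dots> = d A + (\<Sum>S\<in>{S. S \<subseteq> U \<and> A \<subseteq> S} - {A}. d S)"
    using sum.remove[OF fin A_in] by simp
  also have "\<dots> = d A" using z by simp
  finally show ?case by simp
qed

lemma indep_sub:
  fixes d :: "nat set \<Rightarrow> int"
  assumes U: "finite U" and H: "\<And>A. A \<subseteq> U \<Longrightarrow> (\<Sum>S\<in>Pow A. d S) = 0"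
  shows "A \<subseteq> U \<Longrightarrow> d A = 0"
proof (induction "card A" arbitrary: A rule: less_induct)
  case (less A)
  have finA: "finite A" using U less.prems finite_subset by blast
  have fin: "finite (Pow A)" using finA by simp
  have A_in: "A \<in> Pow A" by simp
  have z: "d S = 0" if "S \<in> Pow A - {A}" for S
  proof -
    have "S \<subset> A" using that by auto
    then have "card S < card A" using finA by (simp add: psubset_card_mono)
    then show ?thesis using less.hyps \<open>S \<subset> A\<close> less.prems by blast
  qed
  have "0 = (\<Sum>S\<in>Pow A. d S)" using H less.prems by simp
  also have "\<dots> = d A + (\<Sum>S\<in>Pow A - {A}. d S)"
    using sum.remove[OF fin A_in] by simp
  also have "\<dots> = d A" using z by simp
  finally show ?case by simp
qed

lemma fundL_sorted:
  assumes "sorted i0" "length i0 = n"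
  shows "fundL S n (\<lambda>v. count (mset i0) v) = (if \<forall>j\<in>S. i0 ! (j - 1) < i0 ! j then 1 else 0)"
proof -
  have eq: "i = i0" if "sorted i" "\<forall>v. count (mset i) v = count (mset i0) v" for i
  proof -
    have "mset i = mset i0" using that(2) by (simp add: multiset_eq_iff)
    then have "sort i0 = i" using properties_for_sort that(1) by blast
    then show ?thesis using sorted_sort_id[OF assms(1)] by simp
  qed
  have "{i :: nat list. length i = n \<and> sorted i \<and> (\<forall>j\<in>S. i ! (j - 1) < i ! j) \<and>
      (\<forall>v. count (mset i) v = count (mset i0) v)} =
      (if \<forall>j\<in>S. i0 ! (j - 1) < i0 ! j then {i0} else {})"
    using eq assms by auto
  then show ?thesis unfolding fundL_def by simp
qed

lemma fundL_none:
  assumes "\<not> (\<exists>i0. length i0 = n \<and> sorted i0 \<and> \<alpha> = (\<lambda>v. count (mset i0) v))"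
  shows "fundL S n \<alpha> = 0"
proof -
  have h: "{i :: nat list. length i = n \<and> sorted i \<and> (\<forall>j\<in>S. i ! (j - 1) < i ! j) \<and>
      (\<forall>v. count (mset i) v = \<alpha> v)} = {}"
  proof -
    have False if "length i = n" "sorted i" "\<forall>v. count (mset i) v = \<alpha> v" for i :: "nat list"
    proof -
      have "\<alpha> = (\<lambda>v. count (mset i) v)" using that(3) by auto
      then show False using assms that(1,2) by blast
    qed
    then show ?thesis by blast
  qed
  show ?thesis unfolding fundL_def h by simp
qed

definition iA :: "nat set \<Rightarrow> nat \<Rightarrow> nat list" where
  "iA A n = map (\<lambda>j. card {a\<in>A. a \<le> j}) [0..<n]"

lemma iA_props:
  assumes "A \<subseteq> {1..<n}"
  shows "sorted (iA A n)" "length (iA A n) = n"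
    "\<And>j. j \<in> {1..<n} \<Longrightarrow> (iA A n ! (j - 1) < iA A n ! j) \<longleftrightarrow> j \<in> A"
proof -
  have finA: "finite A" using assms finite_subset by blast
  show "length (iA A n) = n" by (simp add: iA_def)
  show "sorted (iA A n)"
    unfolding sorted_iff_nth_mono
  proof (intro allI impI)
    fix i j assume "i \<le> j" "j < length (iA A n)"
    then show "iA A n ! i \<le> iA A n ! j"
      using finA by (auto simp: iA_def intro!: card_mono)
  qed
  fix j assume j: "j \<in> {1..<n}"
  have e: "{a\<in>A. a \<le> j} = {a\<in>A. a \<le> j - 1} \<union> (if j \<in> A then {j} else {})"
    using j by (auto dest: le_neq_implies_less)
  have f: "finite {a\<in>A. a \<le> j - 1}" using finA by simp
  have nj: "j \<notin> {a\<in>A. a \<le> j - 1}" using j by auto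
  have "card {a\<in>A. a \<le> j} = card {a\<in>A. a \<le> j - 1} + (if j \<in> A then 1 else 0)"
    unfolding e using f nj by (auto simp: card_insert_if)
  moreover have "iA A n ! (j - 1) = card {a\<in>A. a \<le> j - 1}" "iA A n ! j = card {a\<in>A. a \<le> j}"
    using j by (auto simp: iA_def)
  ultimately show "(iA A n ! (j - 1) < iA A n ! j) \<longleftrightarrow> j \<in> A" by simp
qed

lemma fundL_indep:
  fixes d :: "nat set \<Rightarrow> int"
  assumes H: "\<And>\<alpha>. (\<Sum>S\<in>Pow {1..<n}. d S * fundL S n \<alpha>) = 0"
  shows "A \<subseteq> {1..<n} \<Longrightarrow> d A = 0"
proof (rule indep_sub[of "{1..<n}"])
  fix A assume A: "A \<subseteq> {1..<n}"
  note p = iA_props[OF A]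
  have "0 = (\<Sum>S\<in>Pow {1..<n}. d S * fundL S n (\<lambda>v. count (mset (iA A n)) v))" using H by simp
  also have "\<dots> = (\<Sum>S\<in>Pow {1..<n}. if S \<subseteq> A then d S else 0)"
  proof (rule sum.cong)
    fix S assume "S \<in> Pow {1..<n}"
    then have "(\<forall>j\<in>S. iA A n ! (j - 1) < iA A n ! j) \<longleftrightarrow> S \<subseteq> A" using p(3) by blast
    then show "d S * fundL S n (\<lambda>v. count (mset (iA A n)) v) = (if S \<subseteq> A then d S else 0)"
      using fundL_sorted[OF p(1,2)] by simp
  qed simp
  also have "\<dots> = (\<Sum>S\<in>Pow A. d S)"
    using A by (simp add: sum.If_cases Int_def) (rule sum.cong, auto)
  finally show "(\<Sum>S\<in>Pow A. d S) = 0" by simp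
qed simp

lemma chiS_indep:
  fixes d :: "nat set \<Rightarrow> int"
  assumes H: "\<And>w. set w \<subseteq> {1..<n} \<Longrightarrow> (\<Sum>S\<in>Pow {1..<n}. d S * chiS S w) = 0"
  shows "A \<subseteq> {1..<n} \<Longrightarrow> d A = 0"
proof (rule indep_super[of "{1..<n}"])
  fix A assume A: "A \<subseteq> {1..<n}"
  have finA: "finite A" using A finite_subset by blast
  define w where "w = sorted_list_of_set A"
  have sw: "set w = A" "length w = card A" using finA by (simp_all add: w_def)
  have "0 = (\<Sum>S\<in>Pow {1..<n}. d S * chiS S w)" using H A sw by simp
  also have "\<dots> = (\<Sum>S\<in>Pow {1..<n}. (-1) ^ card A * (if A \<subseteq> S then d S else 0))"
    by (rule sum.cong) (auto simp: chiS_eval sw)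
  also have "\<dots> = (-1) ^ card A * (\<Sum>S\<in>{S. S \<subseteq> {1..<n} \<and> A \<subseteq> S}. d S)"
    by (simp add: sum_distrib_left[symmetric] sum.If_cases Int_def)
  finally show "(\<Sum>S\<in>{S. S \<subseteq> {1..<n} \<and> A \<subseteq> S}. d S) = 0" by simp
qed simp


lemma filt_Suc: "length (filter (\<lambda>x. x < Suc v) xs) = length (filter (\<lambda>x. x < v) xs) + count (mset xs) v"
  by (induction xs) auto

lemma filt_sorted: "sorted xs \<Longrightarrow> j < length xs \<Longrightarrow> (xs ! j < v \<longleftrightarrow> j < length (filter (\<lambda>x. x < v) xs))"
proof (induction xs arbitrary: j)
  case Nil then show ?case by simp
next
  case (Cons a xs)
  have s: "sorted xs" "\<forall>y\<in>set xs. a \<le> y" using Cons.prems by auto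
  show ?case
  proof (cases "a < v")
    case True
    then show ?thesis using Cons s by (cases j) auto
  next
    case False
    then have "filter (\<lambda>x. x < v) xs = []" using s by (auto simp: filter_empty_conv)
    moreover have "a \<le> (a # xs) ! j"
    proof (cases j)
      case (Suc j')
      then have "xs ! j' \<in> set xs" using Cons.prems by simp
      then show ?thesis using s Suc by simp
    qed simp
    then have "\<not> (a # xs) ! j < v" using False by simp
    ultimately show ?thesis using False by simp
  qed
qed

definition cr :: "(nat \<Rightarrow> nat) \<Rightarrow> nat \<Rightarrow> nat list" where
  "cr \<alpha> j = concat (map (\<lambda>v. replicate (\<alpha> v) v) [0..<j])"

lemma cr_Suc: "cr \<alpha> (Suc j) = cr \<alpha> j @ replicate (\<alpha> j) j"
  by (simp add: cr_def)

lemma cr_set: "x \<in> set (cr \<alpha> j) \<Longrightarrow> x < j"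
  by (auto simp: cr_def)

lemma cr_sorted: "sorted (cr \<alpha> j)"
proof (induction j)
  case 0 then show ?case by (simp add: cr_def)
next
  case (Suc j)
  then show ?case unfolding cr_Suc sorted_append using cr_set
    by (auto simp: sorted_replicate less_imp_le)
qed

lemma cr_count: "count (mset (cr \<alpha> j)) u = (if u < j then \<alpha> u else 0)"
  by (induction j) (auto simp: cr_Suc cr_def)


locale ELP =
  fixes P :: "'a set" and le :: "'a \<Rightarrow> 'a \<Rightarrow> bool" and rk :: "'a \<Rightarrow> nat"
    and zero one :: 'a and n :: nat and lab :: "'a \<Rightarrow> 'a \<Rightarrow> nat"
  assumes bgp: "bounded_graded_poset P le rk zero one n"
    and n1: "n \<ge> 1"
    and EL: "Sn_EL_labeling P le zero one n lab"
begin

abbreviation "MC \<equiv> max_chains P le"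
abbreviation "M \<equiv> max_chains P le zero one"

lemma finP: "finite P" using bgp unfolding bounded_graded_poset_def by blast
lemma prefl: "x \<in> P \<Longrightarrow> le x x" using bgp unfolding bounded_graded_poset_def by blast
lemma pantisym: "x \<in> P \<Longrightarrow> y \<in> P \<Longrightarrow> le x y \<Longrightarrow> le y x \<Longrightarrow> x = y"
  using bgp unfolding bounded_graded_poset_def by blast
lemma ptrans: "x \<in> P \<Longrightarrow> y \<in> P \<Longrightarrow> z \<in> P \<Longrightarrow> le x y \<Longrightarrow> le y z \<Longrightarrow> le x z"
  using bgp unfolding bounded_graded_poset_def by blast
lemma zeroP: "zero \<in> P" and oneP: "one \<in> P"
  using bgp unfolding bounded_graded_poset_def by blast+
lemma le_zero: "x \<in> P \<Longrightarrow> le zero x" and le_one: "x \<in> P \<Longrightarrow> le x one"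
  using bgp unfolding bounded_graded_poset_def by blast+
lemma rk_zero: "rk zero = 0" and rk_one: "rk one = n"
  using bgp unfolding bounded_graded_poset_def by blast+
lemma rk_cov: "covers P le x y \<Longrightarrow> rk y = rk x + 1"
  using bgp unfolding bounded_graded_poset_def by blast

lemma el_unique: "s \<in> P \<Longrightarrow> t \<in> P \<Longrightarrow> le s t \<Longrightarrow> \<exists>!c. c \<in> MC s t \<and> sorted (labels lab c)"
  using EL unfolding Sn_EL_labeling_def by blast
lemma el_lex: "s \<in> P \<Longrightarrow> t \<in> P \<Longrightarrow> le s t \<Longrightarrow> c \<in> MC s t \<Longrightarrow> sorted (labels lab c)
   \<Longrightarrow> c' \<in> MC s t \<Longrightarrow> lexordp_eq (labels lab c) (labels lab c')"
  using EL unfolding Sn_EL_labeling_def by blast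
lemma el_perm: "m \<in> M \<Longrightarrow> mset (labels lab m) = mset [1..<n+1]"
  using EL unfolding Sn_EL_labeling_def by blast

lemma MC_D: assumes "c \<in> MC s t"
  shows "c \<noteq> []" "hd c = s" "last c = t" "set c \<subseteq> P"
    "\<And>j. Suc j < length c \<Longrightarrow> covers P le (c ! j) (c ! Suc j)"
  using assms unfolding max_chains_def by auto

lemma MC_nthP: "c \<in> MC s t \<Longrightarrow> j < length c \<Longrightarrow> c ! j \<in> P"
  by (meson MC_D(4) nth_mem subsetD)

lemma chain_rk: assumes "c \<in> MC s t" shows "j < length c \<Longrightarrow> rk (c ! j) = rk s + j"
proof (induction j)
  case 0 then show ?case using MC_D[OF assms] by (simp add: hd_conv_nth)
next
  case (Suc j) then show ?case using MC_D(5)[OF assms, of j] rk_cov by auto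
qed

lemma chain_len: assumes "c \<in> MC s t" shows "length c = rk t - rk s + 1" "rk s \<le> rk t"
proof -
  have "rk t = rk s + (length c - 1)" using chain_rk[OF assms, of "length c - 1"] MC_D[OF assms]
    by (simp add: last_conv_nth)
  then show "length c = rk t - rk s + 1" "rk s \<le> rk t" using MC_D[OF assms] by auto
qed

lemma chain_le: assumes "c \<in> MC s t" shows "i \<le> j \<Longrightarrow> j < length c \<Longrightarrow> le (c ! i) (c ! j)"
proof (induction j)
  case 0 then show ?case using MC_nthP[OF assms] prefl by auto
next
  case (Suc j)
  show ?case
  proof (cases "i = Suc j")
    case True then show ?thesis using MC_nthP[OF assms] Suc prefl by auto
  next
    case False
    then have "le (c ! i) (c ! j)" using Suc by auto
    moreover have "le (c ! j) (c ! Suc j)" using MC_D(5)[OF assms, of j] Suc by (simp add: covers_def)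
    moreover have "c ! i \<in> P" "c ! j \<in> P" "c ! Suc j \<in> P"
      using MC_nthP[OF assms] Suc False by auto
    ultimately show ?thesis using ptrans by blast
  qed
qed

lemma MC_ends: assumes "c \<in> MC s t" shows "s \<in> P" "t \<in> P" "le s t"
proof -
  have "s = c ! 0" "t = c ! (length c - 1)" using MC_D[OF assms] by (auto simp: hd_conv_nth last_conv_nth)
  then show "s \<in> P" "t \<in> P" "le s t" using MC_D[OF assms] chain_le[OF assms, of 0 "length c - 1"]
    by (auto intro!: nth_mem)
qed

lemma ex_chain: "s \<in> P \<Longrightarrow> t \<in> P \<Longrightarrow> le s t \<Longrightarrow> \<exists>c. c \<in> MC s t"
  using el_unique by blast

lemma rk_mono: assumes "s \<in> P" "t \<in> P" "le s t" shows "rk s \<le> rk t"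
  using ex_chain[OF assms] chain_len by blast

lemma rk_strict: assumes "s \<in> P" "t \<in> P" "le s t" "s \<noteq> t" shows "rk s < rk t"
proof -
  obtain c where c: "c \<in> MC s t" using ex_chain assms by blast
  have "length c \<noteq> 1"
  proof
    assume "length c = 1"
    then have "hd c = last c" using MC_D[OF c] by (simp add: hd_conv_nth last_conv_nth)
    then show False using MC_D[OF c] assms(4) by simp
  qed
  then show ?thesis using chain_len[OF c] by auto
qed


lemma labels_len: "length (labels lab c) = length c - 1"
  by (simp add: labels_def)
lemma labels_nth: "j < length c - 1 \<Longrightarrow> labels lab c ! j = lab (c ! j) (c ! Suc j)"
  by (simp add: labels_def)

definition seg :: "'a list \<Rightarrow> nat \<Rightarrow> nat \<Rightarrow> 'a list" where
  "seg c a b = drop a (take (Suc b) c)"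

lemma seg_len: "a \<le> b \<Longrightarrow> b < length c \<Longrightarrow> length (seg c a b) = b - a + 1"
  by (simp add: seg_def)
lemma seg_nth: "a \<le> b \<Longrightarrow> b < length c \<Longrightarrow> j \<le> b - a \<Longrightarrow> seg c a b ! j = c ! (a + j)"
  by (simp add: seg_def)

lemma seg_MC: assumes c: "c \<in> MC s t" and ab: "a \<le> b" "b < length c"
  shows "seg c a b \<in> MC (c ! a) (c ! b)"
proof -
  have len: "length (seg c a b) = b - a + 1" using seg_len ab by simp
  have ne: "seg c a b \<noteq> []" using len by auto
  moreover have "hd (seg c a b) = c ! a" using seg_nth[OF ab, of 0] ne
    by (simp add: hd_conv_nth)
  moreover have "last (seg c a b) = c ! b" using seg_nth[OF ab, of "b - a"] len ne ab
    by (simp add: last_conv_nth)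
  moreover have "set (seg c a b) \<subseteq> P" using MC_D(4)[OF c]
    unfolding seg_def by (meson dual_order.trans set_drop_subset set_take_subset)
  moreover have "covers P le (seg c a b ! j) (seg c a b ! Suc j)" if "Suc j < length (seg c a b)" for j
    using that len seg_nth[OF ab, of j] seg_nth[OF ab, of "Suc j"] MC_D(5)[OF c, of "a + j"] ab
    by auto
  ultimately show ?thesis unfolding max_chains_def by blast
qed

lemma seg_labels: assumes ab: "a \<le> b" "b < length c"
  shows "labels lab (seg c a b) = drop a (take b (labels lab c))"
proof (rule nth_equalityI)
  show "length (labels lab (seg c a b)) = length (drop a (take b (labels lab c)))"
    using ab by (simp add: labels_len seg_len)
  fix j assume "j < length (labels lab (seg c a b))"
  then have j: "j < b - a" using ab by (simp add: labels_len seg_len)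
  then show "labels lab (seg c a b) ! j = drop a (take b (labels lab c)) ! j"
    using ab seg_nth[OF ab, of j] seg_nth[OF ab, of "Suc j"]
    by (simp add: labels_nth labels_len seg_len)
qed

lemma app_nth1: "j < length c1 \<Longrightarrow> (c1 @ tl c2) ! j = c1 ! j"
  by (simp add: nth_append)
lemma app_nth2: assumes "c1 \<noteq> []" "c2 \<noteq> []" "last c1 = hd c2" "length c1 \<le> j + 1"
    "j < length c1 + length c2 - 1"
  shows "(c1 @ tl c2) ! j = c2 ! (j + 1 - length c1)"
proof (cases "j < length c1")
  case True
  then have "j = length c1 - 1" using assms by auto
  then show ?thesis using assms True by (simp add: nth_append last_conv_nth hd_conv_nth)
next
  case False
  then have "Suc j - length c1 = Suc (j - length c1)" by auto
  then show ?thesis using assms False by (simp add: nth_append nth_tl)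
qed

lemma app_MC: assumes c1: "c1 \<in> MC s u" and c2: "c2 \<in> MC u t"
  shows "c1 @ tl c2 \<in> MC s t"
proof -
  note d1 = MC_D[OF c1] and d2 = MC_D[OF c2]
  have lenl: "length (c1 @ tl c2) = length c1 + length c2 - 1" using d2(1) by (cases c2) auto
  have "hd (c1 @ tl c2) = s" using d1 by simp
  moreover have "last (c1 @ tl c2) = t"
  proof (cases "tl c2 = []")
    case True then have "c2 = [u]" using d2 by (metis list.collapse)
    then show ?thesis using d1 d2 True by simp
  next
    case False then show ?thesis using d2 by (simp add: last_tl)
  qed
  moreover have "set (tl c2) \<subseteq> set c2" by (cases c2) auto
  then have "set (c1 @ tl c2) \<subseteq> P" using d1(4) d2(4) by auto
  moreover have "covers P le ((c1 @ tl c2) ! j) ((c1 @ tl c2) ! Suc j)"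
    if j: "Suc j < length (c1 @ tl c2)" for j
  proof (cases "Suc j < length c1")
    case True then show ?thesis using app_nth1[of j c1 c2] app_nth1[of "Suc j" c1 c2] d1 by simp
  next
    case False
    have e: "last c1 = hd c2" using d1 d2 by simp
    have "(c1 @ tl c2) ! j = c2 ! (j + 1 - length c1)" "(c1 @ tl c2) ! Suc j = c2 ! (Suc j + 1 - length c1)"
      using app_nth2[OF d1(1) d2(1) e] False j lenl by auto
    moreover have "Suc (j + 1 - length c1) < length c2" using j lenl False by auto
    moreover have "Suc j + 1 - length c1 = Suc (j + 1 - length c1)" using False by auto
    ultimately show ?thesis using d2(5) by metis
  qed
  moreover have "c1 @ tl c2 \<noteq> []" using d1 by simp
  ultimately show ?thesis unfolding max_chains_def by blast
qed

lemma app_labels: assumes c1: "c1 \<in> MC s u" and c2: "c2 \<in> MC u t"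
  shows "labels lab (c1 @ tl c2) = labels lab c1 @ labels lab c2"
proof (rule nth_equalityI)
  note d1 = MC_D[OF c1] and d2 = MC_D[OF c2]
  have e: "last c1 = hd c2" using d1 d2 by simp
  have lenl: "length (c1 @ tl c2) = length c1 + length c2 - 1" using d2(1) by (cases c2) auto
  show "length (labels lab (c1 @ tl c2)) = length (labels lab c1 @ labels lab c2)"
  proof -
    have "length c1 > 0" "length c2 > 0" using d1(1) d2(1) by auto
    then show ?thesis using lenl unfolding labels_len length_append by arith
  qed
  fix j assume "j < length (labels lab (c1 @ tl c2))"
  then have j: "j < length c1 + length c2 - 2" using lenl by (simp add: labels_len)
  show "labels lab (c1 @ tl c2) ! j = (labels lab c1 @ labels lab c2) ! j"
  proof (cases "j < length c1 - 1")
    case True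
    have a: "labels lab (c1 @ tl c2) ! j = lab ((c1 @ tl c2) ! j) ((c1 @ tl c2) ! Suc j)"
      using j lenl by (simp add: labels_nth)
    have b: "(labels lab c1 @ labels lab c2) ! j = labels lab c1 ! j"
      using True by (simp add: nth_append labels_len)
    show ?thesis unfolding a b using True app_nth1[of j c1 c2] app_nth1[of "Suc j" c1 c2]
      by (simp add: labels_nth)
  next
    case False
    have h: "(c1 @ tl c2) ! j = c2 ! (j + 1 - length c1)" "(c1 @ tl c2) ! Suc j = c2 ! (Suc j + 1 - length c1)"
      using app_nth2[OF d1(1) d2(1) e] False j lenl by auto
    have eqs: "Suc j + 1 - length c1 = Suc (j - (length c1 - 1))" "j + 1 - length c1 = j - (length c1 - 1)"
      using False d1(1) length_greater_0_conv[of c1] by arith+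
    have jj: "j - (length c1 - 1) < length c2 - 1" using j False by arith
    have x: "(c1 @ tl c2) ! j = c2 ! (j - (length c1 - 1))"
      "(c1 @ tl c2) ! Suc j = c2 ! Suc (j - (length c1 - 1))" using h unfolding eqs by simp_all
    have a: "labels lab (c1 @ tl c2) ! j = lab ((c1 @ tl c2) ! j) ((c1 @ tl c2) ! Suc j)"
      using j lenl by (simp add: labels_nth)
    have b: "(labels lab c1 @ labels lab c2) ! j = labels lab c2 ! (j - (length c1 - 1))"
      using False by (simp add: nth_append labels_len)
    have c: "labels lab c2 ! (j - (length c1 - 1)) = lab (c2 ! (j - (length c1 - 1))) (c2 ! Suc (j - (length c1 - 1)))"
      using jj by (rule labels_nth)
    show ?thesis unfolding a b c x ..
  qed
qed

lemma M_len: "m \<in> M \<Longrightarrow> length m = n + 1"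
  using chain_len(1)[of m zero one] rk_zero rk_one by simp

lemma M_distinct: "m \<in> M \<Longrightarrow> distinct (labels lab m)"
  using el_perm mset_eq_imp_distinct_iff by (metis distinct_upt)

lemma M_finite: "finite M"
proof -
  have "M \<subseteq> {xs. set xs \<subseteq> P \<and> length xs = n + 1}" using M_len MC_D(4) by blast
  then show ?thesis using finite_lists_length_eq[OF finP] finite_subset by blast
qed

lemma M_rk: "m \<in> M \<Longrightarrow> j < length m \<Longrightarrow> rk (m ! j) = j"
  using chain_rk rk_zero by simp

lemma labels3: "length g = 3 \<Longrightarrow> labels lab g = [lab (g ! 0) (g ! 1), lab (g ! 1) (g ! 2)]"
  by (simp add: labels_def numeral_3_eq_3 numeral_2_eq_2 upt_rec)

definition asc :: "'a list \<Rightarrow> nat \<Rightarrow> bool" where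
  "asc m i \<longleftrightarrow> lab (m ! (i - 1)) (m ! i) < lab (m ! i) (m ! Suc i)"

definition Qrel :: "nat \<Rightarrow> 'a list \<Rightarrow> 'a list \<Rightarrow> bool" where
  "Qrel i m m' \<longleftrightarrow> m' \<in> M \<and> length m' = length m \<and> (\<forall>j. j \<noteq> i \<longrightarrow> m' ! j = m ! j) \<and>
      lab (m' ! (i - 1)) (m' ! i) < lab (m' ! i) (m' ! Suc i)"

lemma Uop_Q: "Uop P le zero one lab i m = (THE m'. Qrel i m m')"
  unfolding Uop_def Qrel_def by simp

lemma seg3: assumes m: "m \<in> M" and i: "1 \<le> i" "i < n"
  shows "seg m (i - 1) (i + 1) \<in> MC (m ! (i - 1)) (m ! (i + 1))"
    "length (seg m (i - 1) (i + 1)) = 3"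
    "labels lab (seg m (i - 1) (i + 1)) = [lab (m ! (i - 1)) (m ! i), lab (m ! i) (m ! Suc i)]"
    "seg m (i - 1) (i + 1) ! 1 = m ! i"
proof -
  have ab: "i - 1 \<le> i + 1" "i + 1 < length m" using i M_len[OF m] by auto
  show "seg m (i - 1) (i + 1) \<in> MC (m ! (i - 1)) (m ! (i + 1))" using seg_MC[OF m ab] .
  show l: "length (seg m (i - 1) (i + 1)) = 3" using seg_len[OF ab] i by simp
  have e: "seg m (i - 1) (i + 1) ! 0 = m ! (i - 1)" "seg m (i - 1) (i + 1) ! 1 = m ! i"
    "seg m (i - 1) (i + 1) ! 2 = m ! Suc i"
    using seg_nth[OF ab, of 0] seg_nth[OF ab, of 1] seg_nth[OF ab, of 2] i by auto
  show "labels lab (seg m (i - 1) (i + 1)) = [lab (m ! (i - 1)) (m ! i), lab (m ! i) (m ! Suc i)]"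
    using labels3[OF l] e by simp
  show "seg m (i - 1) (i + 1) ! 1 = m ! i" using e by simp
qed

lemma M_lab_neq: assumes m: "m \<in> M" and i: "1 \<le> i" "i < n"
  shows "lab (m ! (i - 1)) (m ! i) \<noteq> lab (m ! i) (m ! Suc i)"
proof -
  have "labels lab m ! (i - 1) \<noteq> labels lab m ! i"
    using M_distinct[OF m] M_len[OF m] i by (simp add: labels_len nth_eq_iff_index_eq)
  then show ?thesis using M_len[OF m] i by (simp add: labels_nth)
qed

lemma U_ex1: assumes m: "m \<in> M" and i: "1 \<le> i" "i < n"
  shows "\<exists>!m'. Qrel i m m'"
proof -
  define s where "s = m ! (i - 1)"
  define t where "t = m ! (i + 1)"
  have lm: "length m = n + 1" using M_len[OF m] .
  have sP: "s \<in> P" "t \<in> P" "le s t" unfolding s_def t_def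
    using MC_nthP[OF m] chain_le[OF m, of "i - 1" "i + 1"] lm i by auto
  obtain c where c: "c \<in> MC s t" "sorted (labels lab c)"
    and cu: "\<And>c'. c' \<in> MC s t \<Longrightarrow> sorted (labels lab c') \<Longrightarrow> c' = c"
    using el_unique[OF sP] by blast
  have rs: "rk s = i - 1" "rk t = i + 1" unfolding s_def t_def using M_rk[OF m] lm i by auto
  have lc: "length c = 3" using chain_len(1)[OF c(1)] rs i by simp
  have c0: "c ! 0 = s" and c2: "c ! 2 = t" using MC_D[OF c(1)] lc
    by (auto simp: hd_conv_nth last_conv_nth)
  define y where "y = c ! 1"
  define m' where "m' = m[i := y]"
  have yP: "y \<in> P" using MC_nthP[OF c(1)] lc y_def by simp
  have lm': "length m' = n + 1" using lm m'_def by simp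
  have m'n: "\<And>j. j \<noteq> i \<Longrightarrow> m' ! j = m ! j" unfolding m'_def by simp
  have m'i: "m' ! i = y" unfolding m'_def using lm i by simp
  have cov0: "covers P le s y" using MC_D(5)[OF c(1), of 0] lc c0 y_def by simp
  have cov1: "covers P le y t" using MC_D(5)[OF c(1), of 1] lc c2 y_def by (simp add: numeral_2_eq_2)
  have m'M: "m' \<in> M"
  proof -
    have ne: "m' \<noteq> []" using lm' by auto
    moreover have "hd m' = zero" using m'n[of 0] i MC_D(2)[OF m] lm ne MC_D(1)[OF m]
      by (simp add: hd_conv_nth)
    moreover have "last m' = one" using m'n[of n] i MC_D(3)[OF m] lm lm' ne MC_D(1)[OF m]
      by (simp add: last_conv_nth)
    moreover have "set m' \<subseteq> P" unfolding m'_def using MC_D(4)[OF m] yP set_update_subset_insert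
      by fastforce
    moreover have "covers P le (m' ! j) (m' ! Suc j)" if j: "Suc j < length m'" for j
    proof -
      consider "Suc j = i" | "j = i" | "Suc j \<noteq> i \<and> j \<noteq> i" by blast
      then show ?thesis
      proof cases
        case 1 then show ?thesis using m'n[of j] m'i cov0 s_def by auto
      next
        case 2 then show ?thesis using m'n[of "Suc j"] m'i cov1 t_def by auto
      next
        case 3 then show ?thesis using m'n[of j] m'n[of "Suc j"] MC_D(5)[OF m, of j] j lm lm' by auto
      qed
    qed
    ultimately show ?thesis unfolding max_chains_def by blast
  qed
  have Qm': "Qrel i m m'"
  proof -
    have "labels lab c = [lab (c ! 0) (c ! 1), lab (c ! 1) (c ! 2)]" using labels3[OF lc] .
    then have "lab s y \<le> lab y t" using c(2) c0 c2 y_def by simp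
    moreover have "lab (m' ! (i - 1)) (m' ! i) \<noteq> lab (m' ! i) (m' ! Suc i)"
      using M_lab_neq[OF m'M i] .
    moreover have "m' ! (i - 1) = s" "m' ! Suc i = t" using m'n[of "i - 1"] m'n[of "Suc i"] i s_def t_def
      by auto
    ultimately show ?thesis unfolding Qrel_def using m'M lm lm' m'n m'i by auto
  qed
  moreover have "m'' = m'" if Q: "Qrel i m m''" for m''
  proof -
    have m''M: "m'' \<in> M" and lm'': "length m'' = n + 1" and m''n: "\<And>j. j \<noteq> i \<Longrightarrow> m'' ! j = m ! j"
      and a: "lab (m'' ! (i - 1)) (m'' ! i) < lab (m'' ! i) (m'' ! Suc i)"
      using Q lm unfolding Qrel_def by auto
    note g = seg3[OF m''M i]
    have e: "m'' ! (i - 1) = s" "m'' ! (i + 1) = t" using m''n[of "i - 1"] m''n[of "i + 1"] i s_def t_def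
      by auto
    have "sorted (labels lab (seg m'' (i - 1) (i + 1)))" using g(3) a by simp
    then have "seg m'' (i - 1) (i + 1) = c" using cu g(1) e by simp
    then have "m'' ! i = y" using g(4) y_def by simp
    then show ?thesis
      by (intro nth_equalityI) (auto simp: lm'' lm' m''n m'n m'i, metis m''n m'n m'i)
  qed
  ultimately show ?thesis by blast
qed

abbreviation U :: "nat \<Rightarrow> 'a list \<Rightarrow> 'a list" where
  "U i \<equiv> Uop P le zero one lab i"

lemma U_Q: "m \<in> M \<Longrightarrow> 1 \<le> i \<Longrightarrow> i < n \<Longrightarrow> Qrel i m (U i m)"
  unfolding Uop_Q using theI'[OF U_ex1] by blast

lemma U_M: "m \<in> M \<Longrightarrow> 1 \<le> i \<Longrightarrow> i < n \<Longrightarrow> U i m \<in> M"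
  using U_Q unfolding Qrel_def by blast

lemma U_asc: "m \<in> M \<Longrightarrow> 1 \<le> i \<Longrightarrow> i < n \<Longrightarrow> asc (U i m) i"
  using U_Q unfolding Qrel_def asc_def by blast

lemma U_fix: assumes "m \<in> M" "1 \<le> i" "i < n" "asc m i" shows "U i m = m"
proof -
  have "Qrel i m m" using assms unfolding Qrel_def asc_def by auto
  then show ?thesis unfolding Uop_Q using the1_equality[OF U_ex1[OF assms(1-3)]] by blast
qed

lemma U_dec: assumes m: "m \<in> M" and i: "1 \<le> i" "i < n" and na: "\<not> asc m i"
  shows "ord_class.lexordp (labels lab (U i m)) (labels lab m)"
proof -
  define m' where "m' = U i m"
  have Q: "Qrel i m m'" using U_Q[OF m i] m'_def by simp
  have m'M: "m' \<in> M" and lm': "length m' = length m" and m'n: "\<And>j. j \<noteq> i \<Longrightarrow> m' ! j = m ! j"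
      and a: "lab (m' ! (i - 1)) (m' ! i) < lab (m' ! i) (m' ! Suc i)"
      using Q unfolding Qrel_def by auto
  have lm: "length m = n + 1" using M_len[OF m] .
  note g' = seg3[OF m'M i] and g = seg3[OF m i]
  have e: "m' ! (i - 1) = m ! (i - 1)" "m' ! (i + 1) = m ! (i + 1)" using m'n i by auto
  have sP: "m ! (i - 1) \<in> P" "m ! (i + 1) \<in> P" "le (m ! (i - 1)) (m ! (i + 1))"
    using MC_ends[OF g(1)] by auto
  define a where "a = lab (m' ! (i - 1)) (m' ! i)"
  define b where "b = lab (m' ! i) (m' ! Suc i)"
  define p where "p = lab (m ! (i - 1)) (m ! i)"
  define q where "q = lab (m ! i) (m ! Suc i)"
  have g1: "seg m' (i - 1) (i + 1) \<in> MC (m ! (i - 1)) (m ! (i + 1))" using g'(1) e by simp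
  have srt: "sorted (labels lab (seg m' (i - 1) (i + 1)))" using g'(3) a by simp
  have "lexordp_eq (labels lab (seg m' (i - 1) (i + 1))) (labels lab (seg m (i - 1) (i + 1)))"
    using el_lex[OF sP g1 srt g(1)] .
  then have "lexordp_eq [a, b] [p, q]" using g'(3) g(3) unfolding a_def b_def p_def q_def by simp
  then have "a < p \<or> (\<not> p < a \<and> (b < q \<or> \<not> q < b))" by simp
  moreover have "a < b" "\<not> p < q" using a na unfolding a_def b_def p_def q_def asc_def by auto
  ultimately have lt: "lab (m' ! (i - 1)) (m' ! i) < lab (m ! (i - 1)) (m ! i)"
    unfolding a_def p_def by linarith
  have tk: "take (i - 1) (labels lab m') = take (i - 1) (labels lab m)"
  proof (rule nth_equalityI)
    show "length (take (i - 1) (labels lab m')) = length (take (i - 1) (labels lab m))"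
      using lm' by (simp add: labels_len)
    fix j assume "j < length (take (i - 1) (labels lab m'))"
    then have j: "j < i - 1" using lm' lm i by (simp add: labels_len)
    then show "take (i - 1) (labels lab m') ! j = take (i - 1) (labels lab m) ! j"
      using lm lm' i m'n[of j] m'n[of "Suc j"] by (simp add: labels_nth)
  qed
  have "labels lab m' = take (i - 1) (labels lab m') @ labels lab m' ! (i - 1) # drop (Suc (i - 1)) (labels lab m')"
    by (rule id_take_nth_drop) (use lm' lm i in \<open>simp add: labels_len\<close>)
  moreover have "labels lab m = take (i - 1) (labels lab m) @ labels lab m ! (i - 1) # drop (Suc (i - 1)) (labels lab m)"
    by (rule id_take_nth_drop) (use lm i in \<open>simp add: labels_len\<close>)
  moreover have "labels lab m' ! (i - 1) < labels lab m ! (i - 1)"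
    using lt lm lm' i by (simp add: labels_nth)
  ultimately have "ord_class.lexordp (labels lab m') (labels lab m)"
    using tk lexordp_append_left_rightI[of "labels lab m' ! (i - 1)" "labels lab m ! (i - 1)"
      "take (i - 1) (labels lab m)" "drop (Suc (i - 1)) (labels lab m')" "drop (Suc (i - 1)) (labels lab m)"]
    by simp
  then show ?thesis using m'_def by simp
qed

definition Rl :: "'a list \<Rightarrow> 'a list \<Rightarrow> bool" where
  "Rl y x \<longleftrightarrow> y = x \<or> ord_class.lexordp (labels lab y) (labels lab x)"

lemma Rl_trans: "Rl z y \<Longrightarrow> Rl y x \<Longrightarrow> Rl z x"
  unfolding Rl_def using lexordp_trans by blast

lemma Rl_antisym: "Rl y x \<Longrightarrow> Rl x y \<Longrightarrow> x = y"
  unfolding Rl_def using lexordp_antisym by blast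

lemma U_R: "m \<in> M \<Longrightarrow> 1 \<le> i \<Longrightarrow> i < n \<Longrightarrow> Rl (U i m) m"
  unfolding Rl_def using U_fix U_dec by blast

lemma fold_M_R: "set w \<subseteq> {1..<n} \<Longrightarrow> m \<in> M \<Longrightarrow> foldr U w m \<in> M \<and> Rl (foldr U w m) m"
proof (induction w)
  case Nil then show ?case by (simp add: Rl_def)
next
  case (Cons a w)
  then have IH: "foldr U w m \<in> M" "Rl (foldr U w m) m" and a: "1 \<le> a" "a < n" by auto
  show ?case using U_M[OF IH(1) a] U_R[OF IH(1) a] Rl_trans IH(2) by simp
qed

lemma fold_fix: "set w \<subseteq> {1..<n} \<Longrightarrow> m \<in> M \<Longrightarrow> (foldr U w m = m \<longleftrightarrow> (\<forall>i\<in>set w. asc m i))"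
proof (induction w)
  case Nil then show ?case by simp
next
  case (Cons a w)
  define x where "x = foldr U w m"
  have a: "1 \<le> a" "a < n" using Cons.prems by auto
  have xM: "x \<in> M" "Rl x m" using fold_M_R[of w m] Cons.prems unfolding x_def by auto
  have IH: "x = m \<longleftrightarrow> (\<forall>i\<in>set w. asc m i)" using Cons x_def by auto
  show ?case
  proof
    assume h: "foldr U (a # w) m = m"
    then have h': "U a x = m" unfolding x_def by simp
    then have "Rl m x" using U_R[OF xM(1) a] by simp
    then have "x = m" using Rl_antisym xM(2) by blast
    then show "\<forall>i\<in>set (a # w). asc m i" using IH h' U_asc[OF xM(1) a] by auto
  next
    assume "\<forall>i\<in>set (a # w). asc m i"
    then show "foldr U (a # w) m = m" using IH U_fix[OF Cons.prems(2) a] x_def by auto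
  qed
qed

definition AscS :: "'a list \<Rightarrow> nat set" where
  "AscS m = {i \<in> {1..<n}. asc m i}"


lemma chiP_eq: assumes w: "set w \<subseteq> {1..<n}"
  shows "chiP P le zero one lab w = (\<Sum>m\<in>M. chiS (AscS m) w)"
proof -
  have "chiP P le zero one lab w = (\<Sum>m\<in>M. (-1) ^ length w * (if foldr U w m = m then 1 else 0))"
    unfolding chiP_def by (simp add: sum_distrib_left)
  also have "\<dots> = (\<Sum>m\<in>M. chiS (AscS m) w)"
  proof (rule sum.cong)
    fix m assume m: "m \<in> M"
    have "(set w \<subseteq> AscS m) \<longleftrightarrow> (\<forall>i\<in>set w. asc m i)" using w unfolding AscS_def by auto
    then show "(-1) ^ length w * (if foldr U w m = m then 1 else 0) = chiS (AscS m) w"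
      using fold_fix[OF w m] by (simp add: chiS_eval)
  qed simp
  finally show ?thesis .
qed

lemma mchain_le: assumes t: "set t \<subseteq> P" "\<forall>j. Suc j < length t \<longrightarrow> le (t ! j) (t ! Suc j)"
  shows "i \<le> j \<Longrightarrow> j < length t \<Longrightarrow> le (t ! i) (t ! j)"
proof (induction j)
  case 0 then show ?case using t prefl by (auto simp: subsetD)
next
  case (Suc j)
  show ?case
  proof (cases "i = Suc j")
    case True then show ?thesis using t Suc prefl by (auto simp: subsetD)
  next
    case False
    then have "le (t ! i) (t ! j)" using Suc by auto
    moreover have "le (t ! j) (t ! Suc j)" using t Suc by simp
    moreover have "t ! i \<in> P" "t ! j \<in> P" "t ! Suc j \<in> P"
      using t Suc False by (auto simp: subsetD)
    ultimately show ?thesis using ptrans by blast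
  qed
qed

lemma single_MC: "a \<in> P \<Longrightarrow> [a] \<in> MC a a"
  unfolding max_chains_def by auto

lemma glue: "t \<noteq> [] \<Longrightarrow> set t \<subseteq> P \<Longrightarrow> (\<forall>j. Suc j < length t \<longrightarrow> le (t ! j) (t ! Suc j)) \<Longrightarrow>
  \<exists>m \<in> MC (hd t) (last t). (\<forall>v<length t. m ! (rk (t ! v) - rk (hd t)) = t ! v) \<and>
    (\<forall>j. 0 < j \<and> j < length m - 1 \<and> (\<forall>v<length t. j \<noteq> rk (t ! v) - rk (hd t)) \<longrightarrow>
        labels lab m ! (j - 1) \<le> labels lab m ! j)"
proof (induction t)
  case Nil then show ?case by simp
next
  case (Cons a t')
  show ?case
  proof (cases "t' = []")
    case True
    then show ?thesis using Cons.prems single_MC[of a] by (auto intro!: bexI[of _ "[a]"])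
  next
    case False
    define b where "b = hd t'"
    have ch: "\<forall>j. Suc j < length t' \<longrightarrow> le (t' ! j) (t' ! Suc j)" using Cons.prems(3) by auto
    have sP: "set t' \<subseteq> P" "a \<in> P" using Cons.prems by auto
    obtain m' where m': "m' \<in> MC b (last t')"
      and pos': "\<forall>v<length t'. m' ! (rk (t' ! v) - rk b) = t' ! v"
      and lb': "\<forall>j. 0 < j \<and> j < length m' - 1 \<and> (\<forall>v<length t'. j \<noteq> rk (t' ! v) - rk b) \<longrightarrow>
        labels lab m' ! (j - 1) \<le> labels lab m' ! j"
      using Cons.IH[OF False sP(1) ch] unfolding b_def by blast
    have b0: "b = t' ! 0" using False b_def by (simp add: hd_conv_nth)
    have bP: "b \<in> P" using b0 sP False by (simp add: subsetD)
    have lab_: "le a b" using Cons.prems(3) b0 False by auto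
    obtain c where c: "c \<in> MC a b" "sorted (labels lab c)" using el_unique[OF sP(2) bP lab_] by blast
    define L where "L = length c - 1"
    have L: "L = rk b - rk a" "rk a \<le> rk b" using chain_len[OF c(1)] L_def by auto
    have lc: "length c = L + 1" using L_def MC_D(1)[OF c(1)] by simp
    define m where "m = c @ tl m'"
    have mMC: "m \<in> MC a (last t')" using app_MC[OF c(1) m'] m_def by simp
    have lm: "length m = L + length m'" using lc MC_D(1)[OF m'] m_def by (cases m') auto
    have lm': "length m' = rk (last t') - rk b + 1" using chain_len[OF m'] by simp
    have lmono: "rk b \<le> rk (t' ! v) \<and> rk (t' ! v) \<le> rk (last t')" if "v < length t'" for v
    proof -
      have "le (t' ! 0) (t' ! v)" "le (t' ! v) (t' ! (length t' - 1))"
        using mchain_le[OF sP(1) ch] that by auto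
      moreover have "t' ! 0 \<in> P" "t' ! v \<in> P" "t' ! (length t' - 1) \<in> P"
        using sP(1) that False by (auto simp: subsetD)
      ultimately show ?thesis using rk_mono b0 False by (simp add: last_conv_nth)
    qed
    have e: "last c = hd m'" using MC_D[OF c(1)] MC_D[OF m'] by simp
    have mnth: "m ! (L + x) = m' ! x" if "x < length m'" for x
    proof -
      have "m ! (L + x) = m' ! (L + x + 1 - length c)"
        unfolding m_def using app_nth2[OF MC_D(1)[OF c(1)] MC_D(1)[OF m'] e] that lc by simp
      then show ?thesis using lc by simp
    qed
    have pos: "\<forall>v<length (a # t'). m ! (rk ((a # t') ! v) - rk (hd (a # t'))) = (a # t') ! v"
    proof (intro allI impI)
      fix v assume v: "v < length (a # t')"
      show "m ! (rk ((a # t') ! v) - rk (hd (a # t'))) = (a # t') ! v"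
      proof (cases v)
        case 0
        then show ?thesis using MC_D(1,2)[OF c(1)] m_def by (simp add: nth_append hd_conv_nth)
      next
        case (Suc v')
        have v': "v' < length t'" using v Suc by simp
        define x where "x = rk (t' ! v') - rk b"
        have "rk (t' ! v') - rk a = L + x" using L lmono[OF v'] x_def by simp
        moreover have "x < length m'" using lmono[OF v'] lm' x_def by arith
        ultimately show ?thesis using mnth pos' v' Suc x_def by simp
      qed
    qed
    have lbl: "labels lab m = labels lab c @ labels lab m'" using app_labels[OF c(1) m'] m_def by simp
    have llc: "length (labels lab c) = L" using lc by (simp add: labels_len)
    have lbm: "labels lab m ! (j - 1) \<le> labels lab m ! j"
      if j: "0 < j" "j < length m - 1" "\<forall>v<length (a # t'). j \<noteq> rk ((a # t') ! v) - rk (hd (a # t'))" for j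
    proof -
      have jL: "j \<noteq> L" using j(3)[rule_format, of 1] False L b0 by (cases t') auto
      show ?thesis
      proof (cases "j < L")
        case True
        then have "labels lab m ! (j - 1) = labels lab c ! (j - 1)" "labels lab m ! j = labels lab c ! j"
          using lbl llc by (auto simp: nth_append)
        then show ?thesis using c(2) True llc by (simp add: sorted_nth_mono)
      next
        case False
        then have jg: "L < j" using jL by simp
        then have "labels lab m ! (j - 1) = labels lab m' ! (j - L - 1)" "labels lab m ! j = labels lab m' ! (j - L)"
          using lbl llc by (auto simp: nth_append)
        moreover have "labels lab m' ! (j - L - 1) \<le> labels lab m' ! (j - L)"
        proof -
          have "\<forall>v<length t'. j - L \<noteq> rk (t' ! v) - rk b"
          proof (intro allI impI)
            fix v assume v: "v < length t'"
            have "j \<noteq> rk ((a # t') ! Suc v) - rk (hd (a # t'))" using j(3) v by auto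
            then show "j - L \<noteq> rk (t' ! v) - rk b" using lmono[OF v] L jg by auto
          qed
          moreover have "0 < j - L" "j - L < length m' - 1" using jg j lm by auto
          ultimately show ?thesis using lb' by (metis diff_diff_left)
        qed
        ultimately show ?thesis by simp
      qed
    qed
    have hl: "last (a # t') = last t'" "hd (a # t') = a" using False by auto
    have "m \<in> MC (hd (a # t')) (last (a # t'))" using mMC unfolding hl .
    then show ?thesis using pos lbm by blast
  qed
qed

definition Des :: "'a list \<Rightarrow> nat set" where
  "Des m = {1..<n} - AscS m"

definition FlagSet :: "(nat \<Rightarrow> nat) \<Rightarrow> 'a list set" where
  "FlagSet \<alpha> = {t. \<exists>k\<ge>1. length t = Suc k \<and> set t \<subseteq> P \<and>
      t ! 0 = zero \<and> t ! k = one \<and>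
      (\<forall>j<k. le (t ! j) (t ! Suc j)) \<and> t ! (k - 1) \<noteq> one \<and>
      (\<forall>v<k. \<alpha> v = rk (t ! Suc v) - rk (t ! v)) \<and> (\<forall>v\<ge>k. \<alpha> v = 0)}"

lemma flagF_FlagSet: "flagF P le rk zero one \<alpha> = int (card (FlagSet \<alpha>))"
  unfolding flagF_def FlagSet_def by simp

lemma Flag_rk: assumes t: "length t = Suc k" "set t \<subseteq> P" "t ! 0 = zero"
    "\<forall>j<k. le (t ! j) (t ! Suc j)" "\<forall>v<k. \<alpha> v = rk (t ! Suc v) - rk (t ! v)"
  shows "v \<le> k \<Longrightarrow> rk (t ! v) = (\<Sum>u<v. \<alpha> u)"
proof (induction v)
  case 0 then show ?case using t rk_zero by simp
next
  case (Suc v)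
  have "t ! v \<in> P" "t ! Suc v \<in> P" using t Suc.prems by (auto simp: subsetD)
  then have "rk (t ! v) \<le> rk (t ! Suc v)" using rk_mono t(4) Suc.prems by auto
  then show ?case using Suc t(5) by simp
qed

lemma Flag_has_i0: assumes "t \<in> FlagSet \<alpha>"
  shows "\<exists>i0. length i0 = n \<and> sorted i0 \<and> \<alpha> = (\<lambda>v. count (mset i0) v)"
proof -
  obtain k where k: "k \<ge> 1" "length t = Suc k" "set t \<subseteq> P" "t ! 0 = zero" "t ! k = one"
    "\<forall>j<k. le (t ! j) (t ! Suc j)" "\<forall>v<k. \<alpha> v = rk (t ! Suc v) - rk (t ! v)" "\<forall>v\<ge>k. \<alpha> v = 0"
    using assms unfolding FlagSet_def by blast
  have len: "length (cr \<alpha> j) = (\<Sum>u<j. \<alpha> u)" for j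
    by (induction j) (auto simp: cr_Suc cr_def)
  have "length (cr \<alpha> k) = n" using len Flag_rk[OF k(2,3,4,6,7), of k] k(5) rk_one by simp
  moreover have "\<alpha> = (\<lambda>v. count (mset (cr \<alpha> k)) v)" using k(8) by (auto simp: cr_count)
  ultimately show ?thesis using cr_sorted by blast
qed

context
  fixes i0 :: "nat list"
  assumes i0: "sorted i0" "length i0 = n"
begin

definition rho :: "nat \<Rightarrow> nat" where
  "rho v = length (filter (\<lambda>x. x < v) i0)"

definition KK :: nat where "KK = Suc (last i0)"

definition Phi :: "'a list \<Rightarrow> 'a list" where
  "Phi m = map (\<lambda>v. m ! rho v) [0..<Suc KK]"

definition AscL :: "nat set" where
  "AscL = {j \<in> {1..<n}. i0 ! (j - 1) < i0 ! j}"

definition DD :: "'a list set" where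
  "DD = {m \<in> M. Des m \<subseteq> AscL}"

lemma i0_ne: "i0 \<noteq> []" using i0 n1 by auto

lemma r1: "j < n \<Longrightarrow> (i0 ! j < v \<longleftrightarrow> j < rho v)"
  unfolding rho_def using filt_sorted[OF i0(1)] i0(2) by simp

lemma r2: "rho (Suc v) = rho v + count (mset i0) v"
  unfolding rho_def by (rule filt_Suc)

lemma r0: "rho 0 = 0" unfolding rho_def by simp

lemma rmono: "v \<le> w \<Longrightarrow> rho v \<le> rho w"
proof (induction w)
  case 0 then show ?case by simp
next
  case (Suc w) then show ?case using r2[of w] by (cases "v = Suc w") auto
qed

lemma r3: "rho v \<le> n" unfolding rho_def using i0(2) length_filter_le by metis

lemma last_max: "x \<in> set i0 \<Longrightarrow> x \<le> last i0"
proof -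
  assume "x \<in> set i0"
  then obtain j where j: "j < length i0" "x = i0 ! j" by (auto simp: in_set_conv_nth)
  then show ?thesis using sorted_nth_mono[OF i0(1), of j "length i0 - 1"] i0_ne
    by (simp add: last_conv_nth)
qed

lemma r4: "rho KK = n"
proof -
  have "\<forall>x\<in>set i0. x < KK" using last_max unfolding KK_def by (simp add: less_Suc_eq_le)
  then show ?thesis unfolding rho_def using i0(2) by simp
qed

lemma r5: assumes "v \<ge> KK" shows "count (mset i0) v = 0"
proof -
  have "v \<notin> set i0" using last_max[of v] assms unfolding KK_def by auto
  then show ?thesis by (simp add: count_eq_zero_iff)
qed

lemma r6: "count (mset i0) (KK - 1) > 0"
  using i0_ne unfolding KK_def by simp

lemma r7: "rho (KK - 1) < n"
  using r2[of "KK - 1"] r6 r4 unfolding KK_def by simp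

lemma rho_bounds: assumes "r < n" shows "rho (i0 ! r) \<le> r" "r < rho (Suc (i0 ! r))" "Suc (i0 ! r) \<le> KK"
proof -
  show "rho (i0 ! r) \<le> r" using r1[OF assms, of "i0 ! r"] by simp
  show "r < rho (Suc (i0 ! r))" using r1[OF assms, of "Suc (i0 ! r)"] by simp
  have "i0 ! r \<in> set i0" using assms i0(2) by simp
  then show "Suc (i0 ! r) \<le> KK" using last_max unfolding KK_def by simp
qed

lemma Phi_nth: "v \<le> KK \<Longrightarrow> Phi m ! v = m ! rho v"
  unfolding Phi_def by (simp del: upt_Suc)

lemma Phi_in: assumes m: "m \<in> M" shows "Phi m \<in> FlagSet (\<lambda>v. count (mset i0) v)"
proof -
  have lm: "length m = n + 1" using M_len[OF m] .
  have rl: "rho v < length m" for v using r3 lm by (simp add: le_imp_less_Suc)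
  have K1: "KK \<ge> 1" unfolding KK_def by simp
  have "length (Phi m) = Suc KK" unfolding Phi_def by simp
  moreover have "set (Phi m) \<subseteq> P" unfolding Phi_def using MC_nthP[OF m] rl by auto
  moreover have "Phi m ! 0 = zero" using Phi_nth[of 0] r0 MC_D(1,2)[OF m] by (simp add: hd_conv_nth)
  moreover have "Phi m ! KK = one" using Phi_nth[of KK] r4 MC_D(1,3)[OF m] lm by (simp add: last_conv_nth)
  moreover have "\<forall>j<KK. le (Phi m ! j) (Phi m ! Suc j)"
    using Phi_nth chain_le[OF m] rmono rl by simp
  moreover have "Phi m ! (KK - 1) \<noteq> one"
  proof
    assume "Phi m ! (KK - 1) = one"
    then have "rk (m ! rho (KK - 1)) = n" using Phi_nth[of "KK - 1"] rk_one by simp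
    then show False using M_rk[OF m rl] r7 by simp
  qed
  moreover have "\<forall>v<KK. count (mset i0) v = rk (Phi m ! Suc v) - rk (Phi m ! v)"
  proof (intro allI impI)
    fix v assume v: "v < KK"
    have "rk (m ! rho (Suc v)) = rho (Suc v)" "rk (m ! rho v) = rho v" using M_rk[OF m] rl by auto
    then show "count (mset i0) v = rk (Phi m ! Suc v) - rk (Phi m ! v)"
      using Phi_nth[of "Suc v"] Phi_nth[of v] v r2[of v] by simp
  qed
  moreover have "\<forall>v\<ge>KK. count (mset i0) v = 0" using r5 by simp
  ultimately show ?thesis unfolding FlagSet_def using K1 by blast
qed

lemma Flag_props: assumes "t \<in> FlagSet (\<lambda>v. count (mset i0) v)"
  shows "length t = Suc KK" "set t \<subseteq> P" "t ! 0 = zero" "t ! KK = one"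
    "\<forall>j<KK. le (t ! j) (t ! Suc j)" "\<And>v. v \<le> KK \<Longrightarrow> rk (t ! v) = rho v"
proof -
  obtain k where k: "k \<ge> 1" "length t = Suc k" "set t \<subseteq> P" "t ! 0 = zero" "t ! k = one"
    "\<forall>j<k. le (t ! j) (t ! Suc j)" "t ! (k - 1) \<noteq> one"
    "\<forall>v<k. count (mset i0) v = rk (t ! Suc v) - rk (t ! v)" "\<forall>v\<ge>k. count (mset i0) v = 0"
    using assms unfolding FlagSet_def by blast
  have rs: "rho v = (\<Sum>u<v. count (mset i0) u)" for v
    by (induction v) (auto simp: r0 r2)
  have rkv: "rk (t ! v) = rho v" if "v \<le> k" for v
    using Flag_rk[OF k(2,3,4,6,8) that] rs by simp
  have "t ! (k - 1) \<in> P" using k by (auto simp: subsetD)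
  then have "rk (t ! (k - 1)) < rk (t ! k)" using rk_strict le_one k(5,7) oneP by simp
  then have "count (mset i0) (k - 1) > 0" using k(1) k(8)[rule_format, of "k - 1"] by simp
  then have "k - 1 \<le> last i0" using last_max by simp
  moreover have "\<not> last i0 \<ge> k" using k(9) i0_ne by (metis count_greater_zero_iff last_in_set set_mset_mset
      less_numeral_extra(3))
  ultimately have kK: "k = KK" unfolding KK_def using k(1) by simp
  show "length t = Suc KK" "set t \<subseteq> P" "t ! 0 = zero" "t ! KK = one"
    "\<forall>j<KK. le (t ! j) (t ! Suc j)" using k kK by auto
  show "\<And>v. v \<le> KK \<Longrightarrow> rk (t ! v) = rho v" using rkv kK by simp
qed


lemma DD_M: "m \<in> DD \<Longrightarrow> m \<in> M" unfolding DD_def by simp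

lemma asc_labels: "m \<in> M \<Longrightarrow> 1 \<le> j \<Longrightarrow> j < n \<Longrightarrow> asc m j \<longleftrightarrow> labels lab m ! (j - 1) < labels lab m ! j"
  using M_len[of m] unfolding asc_def by (simp add: labels_nth)

lemma seg_sorted: assumes m: "m \<in> DD" and v: "v < KK"
  shows "sorted (labels lab (seg m (rho v) (rho (Suc v))))"
proof -
  have mM: "m \<in> M" using DD_M[OF m] .
  have lm: "length m = n + 1" using M_len[OF mM] .
  define a where "a = rho v"
  define b where "b = rho (Suc v)"
  have ab: "a \<le> b" "b < length m" using rmono[of v "Suc v"] r3[of "Suc v"] lm a_def b_def by auto
  have "labels lab (seg m a b) = drop a (take b (labels lab m))" using seg_labels[OF ab] .
  moreover have "sorted (drop a (take b (labels lab m)))"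
    unfolding sorted_iff_nth_Suc
  proof (intro allI impI)
    fix i assume i: "Suc i < length (drop a (take b (labels lab m)))"
    then have ib: "a + Suc i < b" using ab lm by (simp add: labels_len)
    define j where "j = a + Suc i"
    have jn: "1 \<le> j" "j < n" using ib r3[of "Suc v"] b_def j_def by auto
    have "asc m j"
    proof (rule ccontr)
      assume "\<not> asc m j"
      then have "j \<in> Des m" unfolding Des_def AscS_def using jn by auto
      then have "j \<in> AscL" using m unfolding DD_def by auto
      then have lt: "i0 ! (j - 1) < i0 ! j" unfolding AscL_def by simp
      have "\<not> (j - 1 < rho v)" using j_def a_def by simp
      moreover have "j - 1 < n" using jn by simp
      ultimately have "v \<le> i0 ! (j - 1)" using r1[of "j - 1" v] by simp
      moreover have "j < rho (Suc v)" using ib j_def b_def by simp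
      then have "i0 ! j < Suc v" using r1[of j "Suc v"] jn by simp
      ultimately show False using lt by simp
    qed
    then have "labels lab m ! (j - 1) < labels lab m ! j" using asc_labels[OF mM jn] by simp
    moreover have "j - 1 = a + i" using j_def by simp
    moreover have bl: "b \<le> length (labels lab m)" using ab lm by (simp add: labels_len)
    have "drop a (take b (labels lab m)) ! i = labels lab m ! (a + i)"
      "drop a (take b (labels lab m)) ! Suc i = labels lab m ! (a + Suc i)"
      using ib bl by (simp_all add: nth_drop nth_take)
    ultimately show "drop a (take b (labels lab m)) ! i \<le> drop a (take b (labels lab m)) ! Suc i"
      using j_def by simp
  qed
  ultimately show ?thesis using a_def b_def by simp
qed

lemma Phi_inj: "inj_on Phi DD"
proof (rule inj_onI)
  fix m1 m2 assume m1: "m1 \<in> DD" and m2: "m2 \<in> DD" and eq: "Phi m1 = Phi m2"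
  have M1: "m1 \<in> M" and M2: "m2 \<in> M" using m1 m2 DD_M by auto
  have l1: "length m1 = n + 1" and l2: "length m2 = n + 1" using M_len M1 M2 by auto
  have er: "m1 ! rho v = m2 ! rho v" if "v \<le> KK" for v
    using eq Phi_nth[OF that, of m1] Phi_nth[OF that, of m2] by simp
  show "m1 = m2"
  proof (rule nth_equalityI)
    show "length m1 = length m2" using l1 l2 by simp
    fix r assume r: "r < length m1"
    show "m1 ! r = m2 ! r"
    proof (cases "r = n")
      case True
      then show ?thesis using MC_D(1,3)[OF M1] MC_D(1,3)[OF M2] l1 l2 by (simp add: last_conv_nth)
    next
      case False
      then have rn: "r < n" using r l1 by simp
      define v where "v = i0 ! r"
      note rb = rho_bounds[OF rn, folded v_def]
      define a where "a = rho v"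
      define b where "b = rho (Suc v)"
      have vK: "v < KK" using rb(3) by simp
      have ab1: "a \<le> b" "b < length m1" using rmono[of v "Suc v"] r3[of "Suc v"] l1 a_def b_def by auto
      have ab2: "a \<le> b" "b < length m2" using ab1 l1 l2 by auto
      have ea: "m1 ! a = m2 ! a" "m1 ! b = m2 ! b" using er[of v] er[of "Suc v"] vK a_def b_def by auto
      have s1: "seg m1 a b \<in> MC (m1 ! a) (m1 ! b)" "sorted (labels lab (seg m1 a b))"
        using seg_MC[OF M1 ab1] seg_sorted[OF m1 vK] a_def b_def by auto
      have s2: "seg m2 a b \<in> MC (m1 ! a) (m1 ! b)" "sorted (labels lab (seg m2 a b))"
        using seg_MC[OF M2 ab2] seg_sorted[OF m2 vK] a_def b_def ea by auto
      have "m1 ! a \<in> P" "m1 ! b \<in> P" "le (m1 ! a) (m1 ! b)" using MC_ends[OF s1(1)] by auto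
      then have "seg m1 a b = seg m2 a b" using el_unique s1 s2 by blast
      moreover have "r - a \<le> b - a" "a + (r - a) = r" using rb a_def b_def by auto
      ultimately show ?thesis using seg_nth[OF ab1, of "r - a"] seg_nth[OF ab2, of "r - a"] by simp
    qed
  qed
qed

lemma Phi_surj: assumes t: "t \<in> FlagSet (\<lambda>v. count (mset i0) v)" shows "\<exists>m\<in>DD. Phi m = t"
proof -
  note fp = Flag_props[OF t]
  have tne: "t \<noteq> []" using fp(1) by auto
  have ch: "\<forall>j. Suc j < length t \<longrightarrow> le (t ! j) (t ! Suc j)" using fp(1,5) by auto
  have ht: "hd t = zero" "last t = one" using fp(1,3,4) tne by (auto simp: hd_conv_nth last_conv_nth)
  obtain m where mM: "m \<in> M" and pos: "\<forall>v<length t. m ! (rk (t ! v) - rk (hd t)) = t ! v"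
    and lb: "\<forall>j. 0 < j \<and> j < length m - 1 \<and> (\<forall>v<length t. j \<noteq> rk (t ! v) - rk (hd t)) \<longrightarrow>
        labels lab m ! (j - 1) \<le> labels lab m ! j"
    using glue[OF tne fp(2) ch] unfolding ht by blast
  have lm: "length m = n + 1" using M_len[OF mM] .
  have pos': "m ! rho v = t ! v" if "v \<le> KK" for v
    using pos[rule_format, of v] fp(1,6) that ht rk_zero by simp
  have "Phi m = t"
  proof (rule nth_equalityI)
    show "length (Phi m) = length t" using fp(1) unfolding Phi_def by simp
    fix v assume "v < length (Phi m)"
    then have "v \<le> KK" unfolding Phi_def by simp
    then show "Phi m ! v = t ! v" using Phi_nth pos' by simp
  qed
  moreover have "m \<in> DD"
  proof -
    have "j \<in> AscL" if j: "j \<in> Des m" for j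
    proof -
      have jn: "1 \<le> j" "j < n" and na: "\<not> asc m j" using j unfolding Des_def AscS_def by auto
      have "\<exists>v<length t. j = rk (t ! v) - rk (hd t)"
      proof (rule ccontr)
        assume "\<not> ?thesis"
        then have "labels lab m ! (j - 1) \<le> labels lab m ! j" using lb jn lm by auto
        moreover have "labels lab m ! (j - 1) \<noteq> labels lab m ! j"
          using M_distinct[OF mM] lm jn by (simp add: labels_len nth_eq_iff_index_eq)
        ultimately show False using na asc_labels[OF mM jn] by simp
      qed
      then obtain v where v0: "v < length t" "j = rk (t ! v) - rk (hd t)" by blast
      have v: "v \<le> KK" "j = rho v" using v0 fp(1) fp(6)[of v] ht rk_zero by auto
      have "j - 1 < rho v" using v jn by simp
      moreover have "j - 1 < n" using jn by simp
      ultimately have "i0 ! (j - 1) < v" using r1[of "j - 1" v] by simp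
      moreover have "\<not> i0 ! j < v" using r1[of j v] jn v by simp
      ultimately show ?thesis unfolding AscL_def using jn by simp
    qed
    then show ?thesis unfolding DD_def using mM by auto
  qed
  ultimately show ?thesis by blast
qed

lemma card_Flag: "card (FlagSet (\<lambda>v. count (mset i0) v)) = card DD"
proof -
  have "Phi ` DD = FlagSet (\<lambda>v. count (mset i0) v)"
    using Phi_in DD_M Phi_surj by blast
  then have "bij_betw Phi DD (FlagSet (\<lambda>v. count (mset i0) v))"
    using Phi_inj by (simp add: bij_betw_def)
  then show ?thesis by (simp add: bij_betw_same_card)
qed

lemma flag_expand_i0:
  "flagF P le rk zero one (\<lambda>v. count (mset i0) v) =
     (\<Sum>S\<in>Pow {1..<n}. int (card {m\<in>M. Des m = S}) * fundL S n (\<lambda>v. count (mset i0) v))"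
proof -
  have fin: "finite M" using M_finite .
  have "int (card DD) = (\<Sum>m\<in>M. (\<lambda>S. if S \<subseteq> AscL then 1 else 0) (Des m))"
    unfolding DD_def using fin by (simp add: sum.inter_filter[symmetric])
  also have "\<dots> = (\<Sum>S\<in>Pow {1..<n}. of_nat (card {m\<in>M. Des m = S}) * (if S \<subseteq> AscL then 1 else 0))"
    by (rule sum_group_card) (use fin in \<open>auto simp: Des_def\<close>)
  also have "\<dots> = (\<Sum>S\<in>Pow {1..<n}. int (card {m\<in>M. Des m = S}) * fundL S n (\<lambda>v. count (mset i0) v))"
  proof (rule sum.cong)
    fix S assume "S \<in> Pow {1..<n}"
    then have "(\<forall>j\<in>S. i0 ! (j - 1) < i0 ! j) \<longleftrightarrow> S \<subseteq> AscL" unfolding AscL_def by auto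
    then show "of_nat (card {m\<in>M. Des m = S}) * (if S \<subseteq> AscL then 1 else 0) =
      int (card {m\<in>M. Des m = S}) * fundL S n (\<lambda>v. count (mset i0) v)"
      using fundL_sorted[OF i0] by simp
  qed simp
  finally show ?thesis unfolding flagF_FlagSet card_Flag by simp
qed

end

lemma flag_expand:
  "flagF P le rk zero one \<alpha> = (\<Sum>S\<in>Pow {1..<n}. int (card {m\<in>M. Des m = S}) * fundL S n \<alpha>)"
proof (cases "\<exists>i0. length i0 = n \<and> sorted i0 \<and> \<alpha> = (\<lambda>v. count (mset i0) v)")
  case True
  then obtain i0 where i0: "length i0 = n" "sorted i0" "\<alpha> = (\<lambda>v. count (mset i0) v)" by blast
  show ?thesis using flag_expand_i0[OF i0(2,1)] i0(3) by simp
next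
  case False
  then have "FlagSet \<alpha> = {}" using Flag_has_i0 by blast
  then show ?thesis using fundL_none[OF False] unfolding flagF_FlagSet by simp
qed

definition beta :: "nat set \<Rightarrow> int" where
  "beta S = (if S \<in> Pow {1..<n} then int (card {m\<in>M. Des m = S}) else 0)"

definition gamma :: "nat set \<Rightarrow> int" where
  "gamma S = (if S \<in> Pow {1..<n} then int (card {m\<in>M. AscS m = S}) else 0)"

lemma qsym_beta: "qsym_coeffs n (flagF P le rk zero one) = beta"
  unfolding qsym_coeffs_def
proof (rule the_equality)
  show "(\<forall>S. S \<notin> Pow {1..<n} \<longrightarrow> beta S = 0) \<and>
    flagF P le rk zero one = (\<lambda>\<alpha>. \<Sum>S\<in>Pow {1..<n}. beta S * fundL S n \<alpha>)"
    using flag_expand by (auto simp: beta_def intro!: ext sum.cong)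
next
  fix d assume d: "(\<forall>S. S \<notin> Pow {1..<n} \<longrightarrow> d S = 0) \<and>
    flagF P le rk zero one = (\<lambda>\<alpha>. \<Sum>S\<in>Pow {1..<n}. d S * fundL S n \<alpha>)"
  have fe: "flagF P le rk zero one = (\<lambda>\<alpha>. \<Sum>S\<in>Pow {1..<n}. beta S * fundL S n \<alpha>)"
    using flag_expand by (auto simp: beta_def intro!: ext sum.cong)
  have H: "(\<Sum>S\<in>Pow {1..<n}. (d S - beta S) * fundL S n \<alpha>) = 0" for \<alpha>
  proof -
    have "(\<Sum>S\<in>Pow {1..<n}. (d S - beta S) * fundL S n \<alpha>) =
      (\<Sum>S\<in>Pow {1..<n}. d S * fundL S n \<alpha>) - (\<Sum>S\<in>Pow {1..<n}. beta S * fundL S n \<alpha>)"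
      by (simp add: left_diff_distrib sum_subtractf)
    also have "\<dots> = 0" using d fe by (metis diff_self)
    finally show ?thesis .
  qed
  show "d = beta"
  proof
    fix S show "d S = beta S"
    proof (cases "S \<in> Pow {1..<n}")
      case True
      then show ?thesis using fundL_indep[of "\<lambda>S. d S - beta S" n S] H by simp
    next
      case False
      then show ?thesis using d by (simp add: beta_def)
    qed
  qed
qed

lemma AscS_sub: "AscS m \<subseteq> {1..<n}" unfolding AscS_def by auto

lemma char_gamma: "char_coeffs n (chiP P le zero one lab) = gamma"
  unfolding char_coeffs_def
proof (rule the_equality)
  have ce: "chiP P le zero one lab w = (\<Sum>S\<in>Pow {1..<n}. gamma S * chiS S w)" if w: "set w \<subseteq> {1..<n}" for w
  proof -
    have "chiP P le zero one lab w = (\<Sum>m\<in>M. chiS (AscS m) w)" using chiP_eq[OF w] .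
    also have "\<dots> = (\<Sum>S\<in>Pow {1..<n}. of_nat (card {m\<in>M. AscS m = S}) * chiS S w)"
      by (rule sum_group_card) (use M_finite AscS_sub in auto)
    also have "\<dots> = (\<Sum>S\<in>Pow {1..<n}. gamma S * chiS S w)"
      by (rule sum.cong) (auto simp: gamma_def)
    finally show ?thesis .
  qed
  then show "(\<forall>S. S \<notin> Pow {1..<n} \<longrightarrow> gamma S = 0) \<and>
    (\<forall>w. set w \<subseteq> {1..<n} \<longrightarrow> chiP P le zero one lab w = (\<Sum>S\<in>Pow {1..<n}. gamma S * chiS S w))"
    by (auto simp: gamma_def)
  fix d assume d: "(\<forall>S. S \<notin> Pow {1..<n} \<longrightarrow> d S = 0) \<and>
    (\<forall>w. set w \<subseteq> {1..<n} \<longrightarrow> chiP P le zero one lab w = (\<Sum>S\<in>Pow {1..<n}. d S * chiS S w))"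
  have H: "(\<Sum>S\<in>Pow {1..<n}. (d S - gamma S) * chiS S w) = 0" if w: "set w \<subseteq> {1..<n}" for w
  proof -
    have "(\<Sum>S\<in>Pow {1..<n}. (d S - gamma S) * chiS S w) =
      (\<Sum>S\<in>Pow {1..<n}. d S * chiS S w) - (\<Sum>S\<in>Pow {1..<n}. gamma S * chiS S w)"
      by (simp add: left_diff_distrib sum_subtractf)
    also have "\<dots> = 0" using d ce[OF w] w by simp
    finally show ?thesis .
  qed
  show "d = gamma"
  proof
    fix S show "d S = gamma S"
    proof (cases "S \<in> Pow {1..<n}")
      case True
      then show ?thesis using chiS_indep[of n "\<lambda>S. d S - gamma S" S] H by simp
    next
      case False
      then show ?thesis using d by (simp add: gamma_def)
    qed
  qed
qed

lemma main: "omegaQ n (flagF P le rk zero one) = chQ n (chiP P le zero one lab)"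
proof
  fix \<alpha>
  have "omegaQ n (flagF P le rk zero one) \<alpha> = (\<Sum>S\<in>Pow {1..<n}. beta S * fundL ({1..<n} - S) n \<alpha>)"
    unfolding omegaQ_def qsym_beta ..
  also have "\<dots> = (\<Sum>T\<in>Pow {1..<n}. gamma T * fundL T n \<alpha>)"
  proof (rule sum.reindex_bij_witness[of _ "\<lambda>T. {1..<n} - T" "\<lambda>S. {1..<n} - S"])
    fix S assume S: "S \<in> Pow {1..<n}"
    show "{1..<n} - ({1..<n} - S) = S" using S by auto
    show "{1..<n} - S \<in> Pow {1..<n}" by auto
    have "{m\<in>M. AscS m = {1..<n} - S} = {m\<in>M. Des m = S}"
      using AscS_sub S unfolding Des_def by blast
    then show "gamma ({1..<n} - S) * fundL ({1..<n} - S) n \<alpha> = beta S * fundL ({1..<n} - S) n \<alpha>"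
      using S by (simp add: gamma_def beta_def)
  qed auto
  also have "\<dots> = chQ n (chiP P le zero one lab) \<alpha>"
    unfolding chQ_def char_gamma ..
  finally show "omegaQ n (flagF P le rk zero one) \<alpha> = chQ n (chiP P le zero one lab) \<alpha>" .
qed

end

theorem mainTheorem3:
  fixes P :: "'a set" and le :: "'a \<Rightarrow> 'a \<Rightarrow> bool" and rk :: "'a \<Rightarrow> nat"
    and zero one :: 'a and n :: nat and lab :: "'a \<Rightarrow> 'a \<Rightarrow> nat"
  assumes "bounded_graded_poset P le rk zero one n"
    and "n \<ge> 1"
    and "Sn_EL_labeling P le zero one n lab"
  shows "omegaQ n (flagF P le rk zero one) = chQ n (chiP P le zero one lab)"
proof -
  interpret ELP P le rk zero one n lab using assms by (unfold_locales) auto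
  show ?thesis by (rule main)
qed

end
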